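(* Let $0<\varepsilon<1/4$ and $3\varepsilon\le\delta\le1$ be real numbers, and let $m,k$ be positive integers with $k\le\delta m/4$. Set $r=(10/\varepsilon^2)\log(1/\varepsilon)$. Let $T_1,\dots,T_l$ be rooted trees, each on at most $t\le m/2$ vertices, such that every level set of every $T_i$ has at most $k$ vertices, and let $e_T=\sum_i e(T_i)$. Let $G$ be a balanced bipartite graph with $n$ vertices in each part and bipartite density $d_G$ (so $e(G)=d_Gn^2$), such that $d_Gn^2\ge e_T+(\delta+\varepsilon)n^2$. If $n\ge m\cdot\exp\big(r\log(1/(\delta+\varepsilon))\big)$, then $G$ contains pairwise edge-disjoint subgraphs isomorphic to $T_1,\dots,T_l$ respectively.
   Context: $\log$ is the natural logarithm. For a rooted tree with root $r$, $N^*(x)$ denotes the set of children of $x$; the level sets are $L_1=\{r\}$ and $L_{i+1}=\bigcup_{x\in L_i}N^*(x)$. A bipartite graph is balanced if its parts have equal size; the bipartite density of a bipartite graph with parts $A,B$ is $e(A,B)/(|A||B|)$. *)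

theory Defs
  imports Complex_Main
begin

definition simple_graph :: "'a set \<Rightarrow> 'a set set \<Rightarrow> bool" where
  "simple_graph V E \<longleftrightarrow> finite V \<and> (\<forall>e\<in>E. \<exists>x y. x \<in> V \<and> y \<in> V \<and> x \<noteq> y \<and> e = {x, y})"

definition is_walk :: "'a set set \<Rightarrow> 'a list \<Rightarrow> bool" where
  "is_walk E xs \<longleftrightarrow> xs \<noteq> [] \<and> (\<forall>i. Suc i < length xs \<longrightarrow> {xs ! i, xs ! Suc i} \<in> E)"

definition connected_graph :: "'a set \<Rightarrow> 'a set set \<Rightarrow> bool" where
  "connected_graph V E \<longleftrightarrow>
     (\<forall>x\<in>V. \<forall>y\<in>V. \<exists>xs. is_walk E xs \<and> hd xs = x \<and> last xs = y)"

definition is_cycle :: "'a set set \<Rightarrow> 'a list \<Rightarrow> bool" where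
  "is_cycle E xs \<longleftrightarrow> length xs \<ge> 3 \<and> distinct xs \<and> is_walk E xs \<and> {last xs, hd xs} \<in> E"

definition is_tree :: "'a set \<Rightarrow> 'a set set \<Rightarrow> bool" where
  "is_tree V E \<longleftrightarrow> simple_graph V E \<and> V \<noteq> {} \<and> connected_graph V E \<and> (\<nexists>xs. is_cycle E xs)"

definition rooted_tree :: "'a set \<Rightarrow> 'a set set \<Rightarrow> 'a \<Rightarrow> bool" where
  "rooted_tree V E r \<longleftrightarrow> is_tree V E \<and> r \<in> V"

definition gdist :: "'a set set \<Rightarrow> 'a \<Rightarrow> 'a \<Rightarrow> nat" where
  "gdist E x y = (LEAST n. \<exists>xs. is_walk E xs \<and> hd xs = x \<and> last xs = y \<and> length xs = Suc n)"

definition children :: "'a set set \<Rightarrow> 'a \<Rightarrow> 'a \<Rightarrow> 'a set" where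
  "children E r x = {y. {x, y} \<in> E \<and> gdist E r y = Suc (gdist E r x)}"

(* level_set E r i = L_{i+1}; so level_set E r 0 = L_1 = {r} *)
primrec level_set :: "'a set set \<Rightarrow> 'a \<Rightarrow> nat \<Rightarrow> 'a set" where
  "level_set E r 0 = {r}"
| "level_set E r (Suc i) = (\<Union>x\<in>level_set E r i. children E r x)"

definition bipartite_graph :: "'a set \<Rightarrow> 'a set \<Rightarrow> 'a set set \<Rightarrow> bool" where
  "bipartite_graph A B E \<longleftrightarrow> finite A \<and> finite B \<and> A \<inter> B = {} \<and>
     (\<forall>e\<in>E. \<exists>a\<in>A. \<exists>b\<in>B. e = {a, b})"

definition balanced_bipartite :: "'a set \<Rightarrow> 'a set \<Rightarrow> 'a set set \<Rightarrow> bool" where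
  "balanced_bipartite A B E \<longleftrightarrow> bipartite_graph A B E \<and> card A = card B"

definition bip_density :: "'a set \<Rightarrow> 'a set \<Rightarrow> 'a set set \<Rightarrow> real" where
  "bip_density A B E = real (card {e\<in>E. \<exists>a\<in>A. \<exists>b\<in>B. e = {a, b}}) / (real (card A) * real (card B))"

(* f embeds (V,ET) into the graph (W,E) as a subgraph: injective, edge preserving;
   the image (f`V, (`) f ` ET) is then a subgraph of (W,E) isomorphic to (V,ET) *)
definition subgraph_embedding :: "('b \<Rightarrow> 'a) \<Rightarrow> 'b set \<Rightarrow> 'b set set \<Rightarrow> 'a set \<Rightarrow> 'a set set \<Rightarrow> bool" where
  "subgraph_embedding f V ET W E \<longleftrightarrow> inj_on f V \<and> f ` V \<subseteq> W \<and> (\<forall>e\<in>ET. f ` e \<in> E)"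

end

theory Submission
  imports Defs
begin


inductive forestlike :: "'b set \<Rightarrow> 'b set set \<Rightarrow> bool" where
  fl_empty: "forestlike {} {}"
| fl_iso: "forestlike V E \<Longrightarrow> v \<notin> V \<Longrightarrow> forestlike (insert v V) E"
| fl_leaf: "forestlike V E \<Longrightarrow> v \<notin> V \<Longrightarrow> u \<in> V \<Longrightarrow> forestlike (insert v V) (insert {u,v} E)"

lemma forestlike_props: "forestlike V E \<Longrightarrow> finite V \<and> (\<forall>e\<in>E. e \<subseteq> V)"
  by (induction rule: forestlike.induct) auto

definition nbrs :: "'a set \<Rightarrow> 'a set set \<Rightarrow> 'a \<Rightarrow> 'a set" where
  "nbrs W F w = {u\<in>W. u \<noteq> w \<and> {w,u} \<in> F}"

lemma embed:
  assumes "forestlike V T"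
  shows "finite W \<Longrightarrow> W \<noteq> {} \<Longrightarrow> (\<forall>w\<in>W. card V \<le> Suc (card (nbrs W F w))) \<Longrightarrow>
     \<exists>f. inj_on f V \<and> f ` V \<subseteq> W \<and> (\<forall>e\<in>T. f ` e \<in> F)"
  using assms
proof (induction rule: forestlike.induct)
  case fl_empty
  then show ?case by auto
next
  case (fl_iso V E v)
  have fV: "finite V" "\<forall>e\<in>E. e \<subseteq> V" using forestlike_props[OF fl_iso.hyps(1)] by auto
  have cV: "card (insert v V) = Suc (card V)" using fV fl_iso.hyps(2) by simp
  from fl_iso.IH[OF fl_iso.prems(1,2)] fl_iso.prems(3) cV obtain f where
    f: "inj_on f V" "f ` V \<subseteq> W" "\<forall>e\<in>E. f ` e \<in> F" by force
  obtain w0 where w0: "w0 \<in> W" using fl_iso.prems(2) by auto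
  let ?S = "insert w0 (nbrs W F w0)"
  have Sfin: "finite (nbrs W F w0)" using fl_iso.prems(1) unfolding nbrs_def by auto
  have "card ?S = Suc (card (nbrs W F w0))" using Sfin by (simp add: nbrs_def)
  hence cS: "card ?S > card V" using fl_iso.prems(3) w0 cV by force
  have "\<not> ?S \<subseteq> f ` V"
  proof
    assume "?S \<subseteq> f ` V"
    hence "card ?S \<le> card (f ` V)" using fV by (intro card_mono) auto
    also have "\<dots> \<le> card V" using card_image_le fV by blast
    finally show False using cS by simp
  qed
  then obtain w where w: "w \<in> ?S" "w \<notin> f ` V" by auto
  have wW: "w \<in> W" using w w0 by (auto simp: nbrs_def)
  have img: "(f(v:=w)) ` V = f ` V" using fl_iso.hyps(2) by (intro image_cong) auto
  show ?case
  proof (intro exI[of _ "f(v:=w)"] conjI)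
    show "inj_on (f(v := w)) (insert v V)"
      using f(1) w(2) img fl_iso.hyps(2) by (auto simp: inj_on_def)
    show "(f(v := w)) ` insert v V \<subseteq> W" using img f(2) wW by auto
    show "\<forall>e\<in>E. (f(v := w)) ` e \<in> F"
    proof
      fix e assume e: "e \<in> E"
      have "(f(v := w)) ` e = f ` e" using fV(2) e fl_iso.hyps(2) by (intro image_cong) auto
      thus "(f(v := w)) ` e \<in> F" using f(3) e by simp
    qed
  qed
next
  case (fl_leaf V E v u)
  have fV: "finite V" "\<forall>e\<in>E. e \<subseteq> V" using forestlike_props[OF fl_leaf.hyps(1)] by auto
  have cV: "card (insert v V) = Suc (card V)" using fV fl_leaf.hyps(2) by simp
  from fl_leaf.IH[OF fl_leaf.prems(1,2)] fl_leaf.prems(3) cV obtain f where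
    f: "inj_on f V" "f ` V \<subseteq> W" "\<forall>e\<in>E. f ` e \<in> F" by force
  have fuW: "f u \<in> W" using f(2) fl_leaf.hyps(3) by auto
  let ?S = "nbrs W F (f u)"
  have Sfin: "finite ?S" using fl_leaf.prems(1) unfolding nbrs_def by auto
  have cS: "card ?S \<ge> card V" using fl_leaf.prems(3) fuW cV by force
  have cVp: "card V \<ge> 1" using fV fl_leaf.hyps(3) by (metis One_nat_def Suc_leI card_gt_0_iff empty_iff)
  have "\<not> ?S \<subseteq> f ` V"
  proof
    assume "?S \<subseteq> f ` V"
    hence "?S \<subseteq> f ` V - {f u}" by (auto simp: nbrs_def)
    hence "card ?S \<le> card (f ` V - {f u})" using fV by (intro card_mono) auto
    also have "\<dots> = card (f ` V) - 1" using fV fl_leaf.hyps(3) by simp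
    also have "\<dots> \<le> card V - 1" using card_image_le fV by (metis diff_le_mono)
    finally show False using cS cVp by simp
  qed
  then obtain w where w: "w \<in> ?S" "w \<notin> f ` V" by auto
  have wW: "w \<in> W" "{f u, w} \<in> F" using w by (auto simp: nbrs_def)
  have img: "(f(v:=w)) ` V = f ` V" using fl_leaf.hyps(2) by (intro image_cong) auto
  show ?case
  proof (intro exI[of _ "f(v:=w)"] conjI)
    show "inj_on (f(v := w)) (insert v V)"
      using f(1) w(2) img fl_leaf.hyps(2) by (auto simp: inj_on_def)
    show "(f(v := w)) ` insert v V \<subseteq> W" using img f(2) wW by auto
    show "\<forall>e\<in>insert {u, v} E. (f(v := w)) ` e \<in> F"
    proof
      fix e assume e: "e \<in> insert {u, v} E"
      show "(f(v := w)) ` e \<in> F"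
      proof (cases "e = {u,v}")
        case True
        have "u \<noteq> v" using fl_leaf.hyps(2,3) by auto
        then show ?thesis using True wW by auto
      next
        case False
        hence e: "e \<in> E" using e by auto
        have "(f(v := w)) ` e = f ` e" using fV(2) e fl_leaf.hyps(2) by (intro image_cong) auto
        thus ?thesis using f(3) e by simp
      qed
    qed
  qed
qed




lemma cycle_exists:
  assumes finV: "finite V" and edges: "\<forall>e\<in>E. \<exists>x y. x \<in> V \<and> y \<in> V \<and> x \<noteq> y \<and> e = {x, y}"
    and ne: "V \<noteq> {}" and deg: "\<forall>v\<in>V. \<exists>a b. a \<noteq> b \<and> {v,a} \<in> E \<and> {v,b} \<in> E"
  shows "\<exists>xs. is_cycle E xs"
proof -
  let ?P = "{xs. distinct xs \<and> is_walk E xs \<and> set xs \<subseteq> V}"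
  obtain v0 where v0: "v0 \<in> V" using ne by auto
  have v0P: "[v0] \<in> ?P" using v0 by (auto simp: is_walk_def)
  have bnd: "\<forall>xs\<in>?P. length xs \<le> card V"
  proof
    fix xs assume xs: "xs \<in> ?P"
    hence "length xs = card (set xs)" using distinct_card by (metis (mono_tags, lifting) mem_Collect_eq)
    also have "\<dots> \<le> card V" using xs finV card_mono by (metis (mono_tags, lifting) mem_Collect_eq)
    finally show "length xs \<le> card V" .
  qed
  have finL: "finite (length ` ?P)" 
  proof (rule finite_subset[of _ "{..card V}"])
    show "length ` ?P \<subseteq> {..card V}" using bnd by fastforce
  qed simp
  define M where "M = Max (length ` ?P)"
  have "M \<in> length ` ?P" unfolding M_def using finL v0P by (intro Max_in) auto
  then obtain xs where xs: "xs \<in> ?P" "length xs = M" by auto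
  have maxl: "\<And>ys. ys \<in> ?P \<Longrightarrow> length ys \<le> length xs"
    using xs(2) finL unfolding M_def by (auto intro: Max_ge)
  have xsne: "xs \<noteq> []" and dxs: "distinct xs" and wxs: "is_walk E xs" and sxs: "set xs \<subseteq> V"
    using xs(1) by (auto simp: is_walk_def)
  define L where "L = length xs"
  have L1: "L \<ge> 1" using xsne L_def by (cases xs) auto
  define x where "x = last xs"
  have xV: "x \<in> V" using sxs xsne x_def by auto
  have lastx: "xs ! (L - 1) = x" using xsne unfolding x_def L_def by (simp add: last_conv_nth)
  obtain a b where ab: "a \<noteq> b" "{x,a} \<in> E" "{x,b} \<in> E" using deg xV by blast
  obtain y where y: "{x,y} \<in> E" "L \<ge> 2 \<longrightarrow> y \<noteq> xs ! (L - 2)"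
  proof (cases "L \<ge> 2 \<and> a = xs ! (L - 2)")
    case True
    then show ?thesis using that[of b] ab by auto
  next
    case False
    then show ?thesis using that[of a] ab by auto
  qed
  obtain p q where pq: "p \<in> V" "q \<in> V" "p \<noteq> q" "{x,y} = {p,q}" using edges y(1) by blast
  have yV: "y \<in> V" and yx: "y \<noteq> x"
    using pq by (auto simp: doubleton_eq_iff)
  show ?thesis
  proof (cases "y \<in> set xs")
    case False
    have "xs @ [y] \<in> ?P"
    proof -
      have "is_walk E (xs @ [y])"
        unfolding is_walk_def
      proof (intro conjI allI impI)
        fix i assume i: "Suc i < length (xs @ [y])"
        show "{(xs @ [y]) ! i, (xs @ [y]) ! Suc i} \<in> E"
        proof (cases "Suc i < L")
          case True
          then show ?thesis using wxs unfolding is_walk_def L_def by (simp add: nth_append)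
        next
          case False
          hence "i = L - 1" "Suc i = L" using i L_def by auto
          then show ?thesis using y(1) lastx L_def by (simp add: nth_append)
        qed
      qed simp
      thus ?thesis using False dxs sxs yV by auto
    qed
    from maxl[OF this] show ?thesis by simp
  next
    case True
    then obtain j where j: "j < L" "xs ! j = y" using L_def by (auto simp: in_set_conv_nth)
    have j1: "j \<noteq> L - 1" using j lastx yx by auto
    have j2: "j \<noteq> L - 2"
    proof
      assume jj: "j = L - 2"
      hence "L \<ge> 2" using j j1 by auto
      thus False using y(2) j jj by auto
    qed
    have j3: "j + 3 \<le> L" using j j1 j2 by auto
    let ?c = "drop j xs"
    have "is_cycle E ?c"
      unfolding is_cycle_def
    proof (intro conjI)
      show "3 \<le> length ?c" using j3 L_def by simp
      show "distinct ?c" using dxs by simp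
      show "is_walk E ?c" unfolding is_walk_def
      proof (intro conjI allI impI)
        show "?c \<noteq> []" using j L_def by simp
        fix i assume "Suc i < length ?c"
        hence "Suc (j+i) < length xs" by simp
        hence "{xs!(j+i), xs!Suc(j+i)} \<in> E" using wxs unfolding is_walk_def by blast
        thus "{?c!i, ?c!Suc i} \<in> E" using j L_def by simp
      qed
      have "last ?c = x" using j L_def x_def by simp
      moreover have "hd ?c = y" using j L_def by (simp add: hd_drop_conv_nth)
      ultimately show "{last ?c, hd ?c} \<in> E" using y(1) by simp
    qed
    thus ?thesis by blast
  qed
qed

lemma is_cycle_mono: "is_cycle E xs \<Longrightarrow> E \<subseteq> E' \<Longrightarrow> is_cycle E' xs"
  unfolding is_cycle_def is_walk_def by blast

lemma acyclic_forestlike: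
  "finite V \<Longrightarrow> (\<forall>e\<in>E. \<exists>x y. x \<in> V \<and> y \<in> V \<and> x \<noteq> y \<and> e = {x, y}) \<Longrightarrow>
   \<not> (\<exists>xs. is_cycle E xs) \<Longrightarrow> forestlike V E"
proof (induction "card V" arbitrary: V E rule: less_induct)
  case less
  note fin = less.prems(1) and edges = less.prems(2) and acyc = less.prems(3)
  show ?case
  proof (cases "V = {}")
    case True
    then have "E = {}" using edges by auto
    then show ?thesis using True fl_empty by simp
  next
    case ne: False
    show ?thesis
    proof (cases "\<exists>v\<in>V. \<forall>e\<in>E. v \<notin> e")
      case True
      then obtain v where v: "v \<in> V" "\<forall>e\<in>E. v \<notin> e" by auto
      have "forestlike (V - {v}) E"
      proof (rule less.hyps)
        show "card (V - {v}) < card V" by (rule card_Diff1_less[OF fin v(1)])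
        show "finite (V - {v})" using fin by simp
        show "\<forall>e\<in>E. \<exists>x y. x \<in> V - {v} \<and> y \<in> V - {v} \<and> x \<noteq> y \<and> e = {x, y}"
        proof
          fix e assume e: "e \<in> E"
          then obtain x y where "x \<in> V" "y \<in> V" "x \<noteq> y" "e = {x,y}" using edges by blast
          moreover have "v \<notin> e" using v(2) e by auto
          ultimately show "\<exists>x y. x \<in> V - {v} \<and> y \<in> V - {v} \<and> x \<noteq> y \<and> e = {x, y}" by blast
        qed
      qed (use acyc in auto)
      then have "forestlike (insert v (V - {v})) E" by (rule fl_iso) simp
      then show ?thesis using v by (simp add: insert_absorb)
    next
      case nonIso: False
      show ?thesis
      proof (cases "\<exists>v\<in>V. \<exists>u. {u,v} \<in> E \<and> (\<forall>e\<in>E. v \<in> e \<longrightarrow> e = {u,v})")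
        case True
        then obtain v u where v: "v \<in> V" "{u,v} \<in> E" "\<forall>e\<in>E. v \<in> e \<longrightarrow> e = {u,v}" by auto
        obtain p q where pq: "p \<in> V" "q \<in> V" "p \<noteq> q" "{u,v} = {p,q}" using edges v(2) by blast
        have uv: "u \<noteq> v" "u \<in> V" using pq by (auto simp: doubleton_eq_iff)
        let ?E = "E - {{u,v}}"
        have flv: "forestlike (V - {v}) ?E"
        proof (rule less.hyps)
          show "card (V - {v}) < card V" by (rule card_Diff1_less[OF fin v(1)])
          show "finite (V - {v})" using fin by simp
          show "\<forall>e\<in>?E. \<exists>x y. x \<in> V - {v} \<and> y \<in> V - {v} \<and> x \<noteq> y \<and> e = {x, y}"
          proof
            fix e assume e: "e \<in> ?E"
            then obtain x y where "x \<in> V" "y \<in> V" "x \<noteq> y" "e = {x,y}" using edges by blast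
            moreover have "v \<notin> e" using v(3) e by blast
            ultimately show "\<exists>x y. x \<in> V - {v} \<and> y \<in> V - {v} \<and> x \<noteq> y \<and> e = {x, y}" by blast
          qed
          show "\<not> (\<exists>xs. is_cycle ?E xs)"
          proof
            assume "\<exists>xs. is_cycle ?E xs"
            then obtain xs where "is_cycle ?E xs" by blast
            hence "is_cycle E xs" by (rule is_cycle_mono) auto
            thus False using acyc by blast
          qed
        qed
        have "forestlike (insert v (V - {v})) (insert {u,v} ?E)"
          using fl_leaf[OF flv, of v u] uv by blast
        moreover have "insert v (V - {v}) = V" using v(1) by blast
        moreover have "insert {u,v} ?E = E" using v(2) by blast
        ultimately show ?thesis by simp
      next
        case False
        have deg: "\<forall>v\<in>V. \<exists>a b. a \<noteq> b \<and> {v,a} \<in> E \<and> {v,b} \<in> E"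
        proof
          fix v assume v: "v \<in> V"
          obtain e where e: "e \<in> E" "v \<in> e" using nonIso v by auto
          obtain x y where xy: "e = {x,y}" using e edges by blast
          obtain a where a: "e = {v,a}"
          proof (cases "v = x")
            case True thus ?thesis using that xy by blast
          next
            case False hence "v = y" using xy e by auto
            thus ?thesis using that xy by (auto simp: insert_commute)
          qed
          have "{a,v} \<in> E" using e a by (simp add: insert_commute)
          hence "\<not> (\<forall>e\<in>E. v \<in> e \<longrightarrow> e = {a,v})" using False v by blast
          then obtain e' where e': "e' \<in> E" "v \<in> e'" "e' \<noteq> {a,v}" by auto
          obtain x' y' where xy': "e' = {x',y'}" using e' edges by blast
          obtain b where b: "e' = {v,b}"
          proof (cases "v = x'")
            case True thus ?thesis using that xy' by blast
          next
            case False hence "v = y'" using xy' e' by auto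
            thus ?thesis using that xy' by (auto simp: insert_commute)
          qed
          have "a \<noteq> b" using e' b by (auto simp: insert_commute)
          thus "\<exists>a b. a \<noteq> b \<and> {v,a} \<in> E \<and> {v,b} \<in> E" using e a e' b by blast
        qed
        have "\<exists>xs. is_cycle E xs" by (rule cycle_exists[OF fin edges ne deg])
        with acyc show ?thesis by simp
      qed
    qed
  qed
qed




lemma edge_count_split:
  assumes fin: "finite W" and w: "w \<in> W" and F2: "\<forall>e\<in>F. \<exists>a b. a \<noteq> b \<and> e = {a,b}"
  shows "card {e\<in>F. e \<subseteq> W} = card {e\<in>F. e \<subseteq> W - {w}} + card (nbrs W F w)"
proof -
  have fP: "finite {e\<in>F. e \<subseteq> W}" by (rule finite_subset[of _ "Pow W"]) (blast, simp add: fin)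
  have split: "{e\<in>F. e \<subseteq> W} = {e\<in>F. e \<subseteq> W - {w}} \<union> {e\<in>F. e \<subseteq> W \<and> w \<in> e}" by blast
  have disj: "{e\<in>F. e \<subseteq> W - {w}} \<inter> {e\<in>F. e \<subseteq> W \<and> w \<in> e} = {}" by blast
  have img: "{e\<in>F. e \<subseteq> W \<and> w \<in> e} = (\<lambda>u. {w,u}) ` nbrs W F w"
  proof (intro equalityI subsetI)
    fix e assume e: "e \<in> {e\<in>F. e \<subseteq> W \<and> w \<in> e}"
    have eF: "e \<in> F" using e by simp
    have "\<exists>a b. a \<noteq> b \<and> e = {a,b}" using F2 eF by (rule bspec)
    then obtain a b where ab: "a \<noteq> b" "e = {a,b}" by blast
    show "e \<in> (\<lambda>u. {w,u}) ` nbrs W F w"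
    proof (cases "w = a")
      case True
      hence "b \<in> nbrs W F w" using e ab by (auto simp: nbrs_def)
      thus ?thesis using True ab by blast
    next
      case False
      hence wb: "w = b" using e ab by auto
      hence "a \<in> nbrs W F w" using e ab by (auto simp: nbrs_def insert_commute)
      thus ?thesis using wb ab by (auto simp: insert_commute)
    qed
  next
    fix e assume "e \<in> (\<lambda>u. {w,u}) ` nbrs W F w"
    thus "e \<in> {e\<in>F. e \<subseteq> W \<and> w \<in> e}" using w by (auto simp: nbrs_def)
  qed
  have inj: "inj_on (\<lambda>u. {w,u}) (nbrs W F w)"
    by (auto simp: inj_on_def nbrs_def doubleton_eq_iff)
  have "card {e\<in>F. e \<subseteq> W} = card {e\<in>F. e \<subseteq> W - {w}} + card {e\<in>F. e \<subseteq> W \<and> w \<in> e}"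
    unfolding split using fP split by (subst card_Un_disjoint) (auto simp: disj)
  also have "card {e\<in>F. e \<subseteq> W \<and> w \<in> e} = card (nbrs W F w)"
    unfolding img by (rule card_image[OF inj])
  finally show ?thesis .
qed

lemma peel:
  fixes D :: real
  assumes F2: "\<forall>e\<in>F. \<exists>a b. a \<noteq> b \<and> e = {a,b}"
  shows "finite W \<Longrightarrow> real (card {e\<in>F. e \<subseteq> W}) > D * real (card W) \<Longrightarrow>
    \<exists>W'\<subseteq>W. W' \<noteq> {} \<and> (\<forall>w\<in>W'. real (card (nbrs W' F w)) > D)"
proof (induction "card W" arbitrary: W rule: less_induct)
  case less
  show ?case
  proof (cases "\<forall>w\<in>W. real (card (nbrs W F w)) > D")
    case True
    have "W \<noteq> {}"
    proof
      assume "W = {}"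
      have "real (card {e\<in>F. e \<subseteq> W}) > 0" using less.prems(2) \<open>W = {}\<close> by simp
      hence "{e\<in>F. e \<subseteq> W} \<noteq> {}" by (metis card.empty of_nat_0 less_irrefl)
      then obtain e where e: "e \<in> F" "e \<subseteq> W" by blast
      have "\<exists>a b. a \<noteq> b \<and> e = {a,b}" using F2 e(1) by (rule bspec)
      then obtain a b where "e = {a,b}" by blast
      thus False using e(2) \<open>W = {}\<close> by simp
    qed
    then show ?thesis using True by blast
  next
    case False
    then obtain w where w: "w \<in> W" "real (card (nbrs W F w)) \<le> D" by auto
    have sp: "card {e\<in>F. e \<subseteq> W} = card {e\<in>F. e \<subseteq> W - {w}} + card (nbrs W F w)"
      by (rule edge_count_split[OF less.prems(1) w(1) F2])
    have cW: "card W = Suc (card (W - {w}))" using card_Suc_Diff1[OF less.prems(1) w(1)] by simp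
    have "real (card {e\<in>F. e \<subseteq> W - {w}}) > D * real (card (W - {w}))"
      using less.prems(2) sp cW w(2) by (simp add: algebra_simps)
    then obtain W' where "W' \<subseteq> W - {w}" "W' \<noteq> {}" "\<forall>w\<in>W'. real (card (nbrs W' F w)) > D"
      using less.hyps[of "W - {w}"] less.prems(1) cW by auto
    then show ?thesis by blast
  qed
qed




lemma emb_mono: "subgraph_embedding f V T W F \<Longrightarrow> F \<subseteq> F' \<Longrightarrow> subgraph_embedding f V T W F'"
  unfolding subgraph_embedding_def by blast

lemma disj1: "B \<subseteq> F - A \<Longrightarrow> A \<inter> B = {}" by blast
lemma disj2: "B \<subseteq> F - A \<Longrightarrow> B \<inter> A = {}" by blast

lemma pack:
  fixes TV :: "nat \<Rightarrow> 'b set" and TE :: "nat \<Rightarrow> 'b set set" and W :: "'a set" and E :: "'a set set"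
  assumes finE: "finite E" and finT: "\<And>i. i < L \<Longrightarrow> finite (TE i)"
    and emb: "\<And>i F. i < L \<Longrightarrow> F \<subseteq> E \<Longrightarrow> c \<le> real (card F) \<Longrightarrow>
                 \<exists>g. subgraph_embedding g (TV i) (TE i) W F"
    and c0: "c \<ge> 0"
  shows "l \<le> L \<Longrightarrow> F \<subseteq> E \<Longrightarrow> real (\<Sum>i<l. card (TE i)) + c \<le> real (card F) \<Longrightarrow>
    \<exists>f. (\<forall>i<l. subgraph_embedding (f i) (TV i) (TE i) W F) \<and>
        (\<forall>i<l. \<forall>j<l. i \<noteq> j \<longrightarrow> ((`) (f i) ` TE i) \<inter> ((`) (f j) ` TE j) = {})"
proof (induction l arbitrary: F)
  case 0
  then show ?case by simp
next
  case (Suc l)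
  have lL: "l < L" using Suc.prems(1) by simp
  have s0: "0 \<le> real (\<Sum>i<l. card (TE i))" by (rule of_nat_0_le_iff)
  have sumS: "real (\<Sum>i<Suc l. card (TE i)) = real (\<Sum>i<l. card (TE i)) + real (card (TE l))"
    by (simp only: sum.lessThan_Suc of_nat_add)
  have cF: "c \<le> real (card F)" using Suc.prems(3) s0 sumS by linarith
  obtain g where g: "subgraph_embedding g (TV l) (TE l) W F" using emb[OF lL Suc.prems(2) cF] by blast
  let ?X = "(`) g ` TE l"
  let ?F = "F - ?X"
  have finF: "finite F" using finE Suc.prems(2) by (rule finite_subset[rotated])
  have c1: "card ?F = card F - card (F \<inter> ?X)" using finF by (intro card_Diff_subset_Int) simp
  have c2: "card (F \<inter> ?X) \<le> card F" using finF by (intro card_mono) auto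
  have c3: "card (F \<inter> ?X) \<le> card (TE l)"
  proof -
    have "card (F \<inter> ?X) \<le> card ?X" using finT[OF lL] by (intro card_mono) auto
    also have "\<dots> \<le> card (TE l)" by (rule card_image_le[OF finT[OF lL]])
    finally show ?thesis .
  qed
  have "card F \<le> card ?F + card (TE l)" using c1 c2 c3 by linarith
  hence "real (card F) \<le> real (card ?F) + real (card (TE l))" by (metis of_nat_add of_nat_le_iff)
  hence cF': "real (\<Sum>i<l. card (TE i)) + c \<le> real (card ?F)" using Suc.prems(3) sumS by linarith
  have FE: "?F \<subseteq> E" using Suc.prems(2) by blast
  obtain f where f: "\<forall>i<l. subgraph_embedding (f i) (TV i) (TE i) W ?F"
      "\<forall>i<l. \<forall>j<l. i \<noteq> j \<longrightarrow> ((`) (f i) ` TE i) \<inter> ((`) (f j) ` TE j) = {}"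
    using Suc.IH[OF less_imp_le[OF lL] FE cF'] by blast
  have sub: "(`) (f i) ` TE i \<subseteq> ?F" if il: "i < l" for i
  proof -
    have "subgraph_embedding (f i) (TV i) (TE i) W ?F" using f(1) il by simp
    hence "\<forall>e\<in>TE i. f i ` e \<in> ?F" unfolding subgraph_embedding_def by (elim conjE)
    thus ?thesis by (intro image_subsetI) (elim ballE, auto)
  qed
  show ?case
  proof (intro exI[of _ "f(l := g)"] conjI allI impI)
    fix i assume i: "i < Suc l"
    show "subgraph_embedding ((f(l := g)) i) (TV i) (TE i) W F"
    proof (cases "i = l")
      case True
      then show ?thesis using g by simp
    next
      case False
      hence "i < l" using i by simp
      hence "subgraph_embedding (f i) (TV i) (TE i) W ?F" using f(1) by blast
      hence "subgraph_embedding (f i) (TV i) (TE i) W F" by (rule emb_mono) blast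
      thus ?thesis using False by simp
    qed
  next
    fix i j assume ij: "i < Suc l" "j < Suc l" "i \<noteq> j"
    show "(`) ((f(l := g)) i) ` TE i \<inter> (`) ((f(l := g)) j) ` TE j = {}"
    proof (cases "i = l")
      case True
      then have "j < l" using ij by auto
      have "(f(l := g)) i = g" "(f(l := g)) j = f j" using True ij \<open>j<l\<close> by auto
      then show ?thesis using disj1[OF sub[OF \<open>j<l\<close>]] True by (simp only:)
    next
      case False
      then have il: "i < l" using ij by auto
      show ?thesis
      proof (cases "j = l")
        case True
        have "(f(l := g)) j = g" "(f(l := g)) i = f i" using True il by auto
        then show ?thesis using disj2[OF sub[OF il]] True by (simp only:)
      next
        case False
        have "(f(l := g)) j = f j" "(f(l := g)) i = f i" using False il by auto
        moreover have "j < l" using False ij by auto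
        ultimately show ?thesis using il ij f(2) by simp
      qed
    qed
  qed
qed




lemma ball_sub: "\<forall>x\<in>A. P x \<Longrightarrow> B \<subseteq> A \<Longrightarrow> \<forall>x\<in>B. P x" by blast
lemma filt_all: "\<forall>x\<in>F. P x \<Longrightarrow> {x\<in>F. P x} = F" by blast

theorem theorem4p2:
  fixes \<epsilon> \<delta> :: real and m k t l :: nat
    and TV :: "nat \<Rightarrow> 'b set" and TE :: "nat \<Rightarrow> 'b set set" and root :: "nat \<Rightarrow> 'b"
    and A B :: "'a set" and E :: "'a set set" and n :: nat
  assumes "0 < \<epsilon>" "\<epsilon> < 1/4" "3 * \<epsilon> \<le> \<delta>" "\<delta> \<le> 1"
    and "m > 0" "k > 0" "real k \<le> \<delta> * real m / 4"
    and "real t \<le> real m / 2"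
    and trees: "\<And>i. i < l \<Longrightarrow> rooted_tree (TV i) (TE i) (root i)"
    and sizes: "\<And>i. i < l \<Longrightarrow> card (TV i) \<le> t"
    and levels: "\<And>i j. i < l \<Longrightarrow> card (level_set (TE i) (root i) j) \<le> k"
    and G: "balanced_bipartite A B E" "card A = n"
    and dens: "bip_density A B E * real n ^ 2
                 \<ge> real (\<Sum>i<l. card (TE i)) + (\<delta> + \<epsilon>) * real n ^ 2"
    and nbig: "real n \<ge> real m * exp ((10 / \<epsilon>^2) * ln (1 / \<epsilon>) * ln (1 / (\<delta> + \<epsilon>)))"
  shows "\<exists>f :: nat \<Rightarrow> 'b \<Rightarrow> 'a.
           (\<forall>i<l. subgraph_embedding (f i) (TV i) (TE i) (A \<union> B) E) \<and>
           (\<forall>i<l. \<forall>j<l. i \<noteq> j \<longrightarrow> ((`) (f i) ` TE i) \<inter> ((`) (f j) ` TE j) = {})"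
proof -
  define s where "s = \<delta> + \<epsilon>"
  define r where "r = (10 / \<epsilon>^2) * ln (1 / \<epsilon>)"
  define X where "X = exp (r * ln (1 / s))"
  have nbig': "real n \<ge> real m * X" using nbig unfolding X_def r_def s_def by simp
  have finA: "finite A" and finB: "finite B" and AB: "A \<inter> B = {}"
    and edgesAB: "\<forall>e\<in>E. \<exists>a\<in>A. \<exists>b\<in>B. e = {a, b}" and cB: "card B = n"
    using G unfolding balanced_bipartite_def bipartite_graph_def by auto
  have s0: "s > 0" unfolding s_def using assms(1,3) by linarith
  have n0: "n > 0"
  proof (rule ccontr)
    assume "\<not> n > 0"
    hence "real n = 0" by simp
    moreover have "real m * X > 0" unfolding X_def using assms(5) by simp
    ultimately show False using nbig' by linarith
  qed
  have Esub: "E \<subseteq> (\<lambda>(a,b). {a,b}) ` (A \<times> B)"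
  proof
    fix e assume "e \<in> E"
    then obtain a b where "a \<in> A" "b \<in> B" "e = {a,b}" using edgesAB by blast
    thus "e \<in> (\<lambda>(a,b). {a,b}) ` (A \<times> B)" by force
  qed
  have finE: "finite E" using Esub finA finB by (meson finite_SigmaI finite_imageI finite_subset)
  have "card E \<le> card ((\<lambda>(a,b). {a,b}) ` (A \<times> B))" using Esub finA finB by (intro card_mono) auto
  also have "\<dots> \<le> card (A \<times> B)" using finA finB by (intro card_image_le) auto
  also have "\<dots> = n * n" using G(2) cB by (simp add: card_cartesian_product)
  finally have cEle: "card E \<le> n * n" .
  have filt: "{e\<in>E. \<exists>a\<in>A. \<exists>b\<in>B. e = {a, b}} = E" using edgesAB by blast
  have dens_eq: "bip_density A B E * real n ^ 2 = real (card E)"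
    unfolding bip_density_def filt using G(2) cB n0 by (simp add: power2_eq_square)
  have cE: "real (\<Sum>i<l. card (TE i)) + s * real n ^ 2 \<le> real (card E)"
    using dens dens_eq unfolding s_def by simp
  have "s * real n ^ 2 \<le> real n ^ 2"
  proof -
    have "0 \<le> real (\<Sum>i<l. card (TE i))" by (rule of_nat_0_le_iff)
    hence "s * real n ^ 2 \<le> real (card E)" using cE by linarith
    also have "\<dots> \<le> real n ^ 2" using cEle by (simp add: power2_eq_square) (metis of_nat_le_iff of_nat_mult)
    finally show ?thesis .
  qed
  hence s1: "s \<le> 1" using n0 by simp
  have lnE: "ln (1/\<epsilon>) \<ge> 3/4"
  proof -
    have "ln \<epsilon> \<le> \<epsilon> - 1" using assms(1) by (rule ln_le_minus_one)
    moreover have "ln (1/\<epsilon>) = - ln \<epsilon>" using assms(1) by (simp add: ln_div)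
    ultimately show ?thesis using assms(2) by linarith
  qed
  have eps2: "10 / \<epsilon>^2 \<ge> 1"
  proof -
    have "\<epsilon>^2 \<le> 1" using assms(1,2) by (simp add: power_le_one)
    moreover have "\<epsilon>^2 > 0" using assms(1) by simp
    ultimately show ?thesis by (simp add: field_simps)
  qed
  have r1: "r \<ge> 1"
  proof -
    have "1 * (3/4) \<le> (10 / \<epsilon>^2) * ln (1/\<epsilon>)" using eps2 lnE by (intro mult_mono) auto
    hence "r \<ge> 3/4" unfolding r_def by simp
    show ?thesis
    proof -
      have "10 / \<epsilon>^2 \<ge> 2"
      proof -
        have "\<epsilon>^2 \<le> 1" using assms(1,2) by (simp add: power_le_one)
        moreover have "\<epsilon>^2 > 0" using assms(1) by simp
        ultimately show ?thesis by (simp add: field_simps)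
      qed
      hence "2 * (3/4) \<le> (10 / \<epsilon>^2) * ln (1/\<epsilon>)" using lnE by (intro mult_mono) auto
      thus ?thesis unfolding r_def by simp
    qed
  qed
  have lns: "ln (1/s) \<ge> 0" using s0 s1 by simp
  have "X \<ge> exp (ln (1/s))" unfolding X_def using r1 lns
    by (simp add: mult_le_cancel_right1)
  hence X1: "X \<ge> 1/s" using s0 by simp
  have mle: "real m \<le> real n * s"
  proof -
    have "real m * (1/s) \<le> real m * X" using X1 by (intro mult_left_mono) auto
    hence "real m / s \<le> real n" using nbig' by simp
    thus ?thesis using s0 by (simp add: field_simps)
  qed
  have tle: "real t \<le> real n * s / 2" using assms(8) mle by linarith
  have edge2: "\<forall>e\<in>E. \<exists>a b. a \<noteq> b \<and> e = {a,b}"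
  proof
    fix e assume "e \<in> E"
    then obtain a b where "a \<in> A" "b \<in> B" "e = {a,b}" using edgesAB by blast
    moreover have "a \<noteq> b" using AB \<open>a \<in> A\<close> \<open>b \<in> B\<close> by blast
    ultimately show "\<exists>a b. a \<noteq> b \<and> e = {a,b}" by blast
  qed
  define W where "W = A \<union> B"
  have finW: "finite W" unfolding W_def using finA finB by simp
  have cW: "card W = 2 * n" unfolding W_def using finA finB AB G(2) cB by (simp add: card_Un_disjoint)
  have EW: "\<forall>e\<in>E. e \<subseteq> W"
  proof
    fix e assume "e \<in> E"
    then obtain a b where "a \<in> A" "b \<in> B" "e = {a,b}" using edgesAB by blast
    thus "e \<subseteq> W" unfolding W_def by simp
  qed
  have fl: "forestlike (TV i) (TE i)" if i: "i < l" for i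
  proof -
    have "is_tree (TV i) (TE i)" using trees[OF i] unfolding rooted_tree_def by simp
    hence sg: "simple_graph (TV i) (TE i)" and nc: "\<not> (\<exists>xs. is_cycle (TE i) xs)"
      unfolding is_tree_def by auto
    show ?thesis using sg nc unfolding simple_graph_def by (intro acyclic_forestlike) auto
  qed
  have finT: "finite (TE i)" if i: "i < l" for i
  proof -
    have "finite (TV i) \<and> (\<forall>e\<in>TE i. e \<subseteq> TV i)" using forestlike_props[OF fl[OF i]] .
    hence "TE i \<subseteq> Pow (TV i)" "finite (Pow (TV i))" by auto
    thus ?thesis by (rule finite_subset)
  qed
  have emb: "\<exists>g. subgraph_embedding g (TV i) (TE i) W F"
    if i: "i < l" and FE: "F \<subseteq> E" and cF: "s * real n ^ 2 \<le> real (card F)" for i F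
  proof -
    have F2: "\<forall>e\<in>F. \<exists>a b. a \<noteq> b \<and> e = {a,b}" using edge2 FE by (rule ball_sub)
    have FW: "{e\<in>F. e \<subseteq> W} = F" using ball_sub[OF EW FE] by (rule filt_all)
    have cWr: "real (card W) = 2 * real n" using cW by simp
    have "(real t - 1) * real (card W) \<le> (real n * s / 2 - 1) * (2 * real n)"
      unfolding cWr by (rule mult_right_mono) (use tle in auto)
    also have "\<dots> = s * real n ^ 2 - 2 * real n" by (simp add: power2_eq_square algebra_simps)
    also have "\<dots> < s * real n ^ 2" using n0 by simp
    finally have "real (card {e\<in>F. e \<subseteq> W}) > (real t - 1) * real (card W)" using cF FW by simp
    then obtain W' where W': "W' \<subseteq> W" "W' \<noteq> {}" "\<forall>w\<in>W'. real (card (nbrs W' F w)) > real t - 1"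
      using peel[OF F2 finW] by blast
    have finW': "finite W'" using W'(1) finW by (rule finite_subset)
    have deg: "\<forall>w\<in>W'. card (TV i) \<le> Suc (card (nbrs W' F w))"
    proof
      fix w assume "w \<in> W'"
      hence "real t < real (card (nbrs W' F w)) + 1" using W'(3) by auto
      hence "t \<le> card (nbrs W' F w)" by linarith
      thus "card (TV i) \<le> Suc (card (nbrs W' F w))" using sizes[OF i] by linarith
    qed
    obtain g where g: "inj_on g (TV i)" "g ` TV i \<subseteq> W'" "\<forall>e\<in>TE i. g ` e \<in> F"
      using embed[OF fl[OF i] finW' W'(2) deg] by blast
    have "g ` TV i \<subseteq> W" using g(2) W'(1) by (rule subset_trans)
    hence "subgraph_embedding g (TV i) (TE i) W F"
      unfolding subgraph_embedding_def using g(1,3) by simp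
    thus ?thesis by blast
  qed
  have c0: "s * real n ^ 2 \<ge> 0" using s0 by simp
  have "\<exists>f. (\<forall>i<l. subgraph_embedding (f i) (TV i) (TE i) W E) \<and>
        (\<forall>i<l. \<forall>j<l. i \<noteq> j \<longrightarrow> ((`) (f i) ` TE i) \<inter> ((`) (f j) ` TE j) = {})"
    by (rule pack[OF finE finT emb c0]) (use cE in auto)
  thus ?thesis unfolding W_def .
qed


end
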